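(* Let $q=2$ and $z>4$. Consider the mean-field equation in $u\in[0,1)$, $$u=\frac{1-\exp(\Delta_{\beta,2,z}(u))}{1+\exp(\Delta_{\beta,2,z}(u))},\qquad\Delta_{\beta,2,z}(u):=-\frac{\beta}{2^{z-1}}\Big[(1+u)^{z-1}-(1-u)^{z-1}\Big].$$ There exist $0<\beta_0(2,z)<\beta_1(2,z)$ such that: for $0<\beta<\beta_0$ the mean-field equation has only the trivial solution $u=0$; for $\beta_0<\beta<\beta_1$ it has exactly two additional solutions $0<u_1<u_2<1$; for $\beta=\beta_0$ or $\beta\geq\beta_1$ it has exactly one additional solution $0<u_2<1$. *)

theory Defs
  imports Complex_Main
begin

definition Delta2 :: "real \<Rightarrow> nat \<Rightarrow> real \<Rightarrow> real" where
  "Delta2 \<beta> z u = - (\<beta> / 2 ^ (z - 1)) * ((1 + u) ^ (z - 1) - (1 - u) ^ (z - 1))"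

definition mf_solutions :: "real \<Rightarrow> nat \<Rightarrow> real set" where
  "mf_solutions \<beta> z = {u. 0 \<le> u \<and> u < 1 \<and>
      u = (1 - exp (Delta2 \<beta> z u)) / (1 + exp (Delta2 \<beta> z u))}"

end

theory Submission imports Defs begin

lemma sum_j_choose:
  fixes x :: real
  shows "(\<Sum>j\<le>Suc n. real j * real (Suc n choose j) * x^j) = real (Suc n) * x * (1+x)^n"
proof -
  have "(\<Sum>j\<le>Suc n. real j * real (Suc n choose j) * x^j)
      = (\<Sum>j\<le>n. real (Suc j) * real (Suc n choose Suc j) * x^(Suc j))"
    by (subst sum.atMost_Suc_shift) simp
  also have "\<dots> = (\<Sum>j\<le>n. real (Suc n) * x * (real (n choose j) * x^j * 1^(n-j)))"
  proof (rule sum.cong[OF refl])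
    fix j assume "j \<in> {..n}"
    have "real (Suc j) * real (Suc n choose Suc j) = real (Suc n) * real (n choose j)"
      using Suc_times_binomial[of j n] by (metis of_nat_mult)
    then show "real (Suc j) * real (Suc n choose Suc j) * x^(Suc j) = real (Suc n) * x * (real (n choose j) * x^j * 1^(n-j))"
      by (simp add: algebra_simps)
  qed
  also have "\<dots> = real (Suc n) * x * (x+1)^n"
    by (simp add: binomial_ring sum_distrib_left)
  finally show ?thesis by (simp add: add.commute)
qed

lemma sum_S:
  fixes x :: real
  shows "(\<Sum>j\<le>Suc n. real (Suc n choose j) * (2*real j + 1 - real (Suc n)) * x^j)
       = (1+x)^n * ((real (Suc n)+1)*x - real n)"
proof -
  have "(\<Sum>j\<le>Suc n. real (Suc n choose j) * (2*real j + 1 - real (Suc n)) * x^j)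
     = 2 * (\<Sum>j\<le>Suc n. real j * real (Suc n choose j) * x^j) - real n * (\<Sum>j\<le>Suc n. real (Suc n choose j) * x^j * 1^(Suc n - j))"
    by (simp add: sum_distrib_left sum_subtractf[symmetric] algebra_simps)
  also have "\<dots> = 2 * (real (Suc n) * x * (1+x)^n) - real n * (x+1)^Suc n"
    by (simp only: sum_j_choose binomial_ring)
  finally show ?thesis by (simp add: algebra_simps)
qed


definition Vf :: "nat \<Rightarrow> real \<Rightarrow> real" where
  "Vf m u = (1+u)^(m-1)*((1+u) - real m*(1-u)) + (1-u)^(m-1)*(real m*(1+u) - (1-u))"

definition cV :: "nat \<Rightarrow> nat \<Rightarrow> real" where
  "cV m j = real (m choose j) * (2*real j + 1 - real m) * (1 - (-1)^j)"

lemma cV_term: "cV m j * u^j = real (m choose j) * (2*real j + 1 - real m) * u^j - real (m choose j) * (2*real j + 1 - real m) * (-u)^j"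
  unfolding cV_def power_minus[of u j] by (simp add: algebra_simps)

lemma Vf_alt: "m = Suc n \<Longrightarrow> Vf m u = (1+u)^n * ((real (Suc n)+1)*u - real n) - (1+(-u))^n * ((real (Suc n)+1)*(-u) - real n)"
  unfolding Vf_def by (simp add: algebra_simps)


lemma Vf_sum:
  assumes "m \<ge> 1"
  shows "Vf m u = (\<Sum>j\<le>m. cV m j * u^j)"
proof -
  obtain n where m: "m = Suc n" using assms by (cases m) auto
  have "(\<Sum>j\<le>m. cV m j * u^j) = (\<Sum>j\<le>Suc n. real (Suc n choose j) * (2*real j + 1 - real (Suc n)) * u^j)
        - (\<Sum>j\<le>Suc n. real (Suc n choose j) * (2*real j + 1 - real (Suc n)) * (-u)^j)"
    unfolding sum_subtractf[symmetric] cV_term m ..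
  also have "\<dots> = Vf m u"
    unfolding sum_S Vf_alt[OF m] ..
  finally show ?thesis by simp
qed

lemma V_mono:
  assumes m: "m \<ge> 4" and u: "0 < u" and uv: "u < v" and V0: "Vf m u \<ge> 0"
  shows "Vf m v > 0"
proof -
  define N where "N = (m-1) div 2"
  define t where "t = v / u"
  have t1: "t > 1" using u uv by (simp add: t_def)
  have vt: "v = t * u" using u by (simp add: t_def)
  define j0 where "j0 = (if odd m then m else m - 1)"
  have j0m: "j0 \<le> m" "j0 > N" "odd j0" using m by (auto simp: j0_def N_def)
  have le: "t^N * (cV m j * u^j) \<le> cV m j * v^j" if "j \<le> m" for j
  proof (cases "j \<le> N")
    case True
    have "2*j+1 \<le> m" using True m unfolding N_def by linarith
    then have "2*real j + 1 - real m \<le> 0" by linarith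
    moreover have "1 - (-1::real)^j \<ge> 0" by (cases "even j") auto
    ultimately have c: "cV m j \<le> 0" unfolding cV_def
      by (simp add: mult_nonneg_nonpos mult_nonpos_nonneg)
    have "t^j \<le> t^N" using True t1 by (simp add: power_increasing)
    then have "cV m j * t^N \<le> cV m j * t^j" using c by (simp add: mult_left_mono_neg)
    then have "(cV m j * t^N) * u^j \<le> (cV m j * t^j) * u^j" using u by (simp add: mult_right_mono)
    then show ?thesis unfolding vt power_mult_distrib by (simp add: mult_ac)
  next
    case False
    have "2*j+1 \<ge> m" using False m unfolding N_def by linarith
    then have "2*real j + 1 - real m \<ge> 0" by linarith
    moreover have "1 - (-1::real)^j \<ge> 0" by (cases "even j") auto
    ultimately have c: "cV m j \<ge> 0" unfolding cV_def by simp
    have "t^N \<le> t^j" using False t1 by (simp add: power_increasing)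
    then have "cV m j * t^N \<le> cV m j * t^j" using c by (simp add: mult_left_mono)
    then have "(cV m j * t^N) * u^j \<le> (cV m j * t^j) * u^j" using u by (simp add: mult_right_mono)
    then show ?thesis unfolding vt power_mult_distrib by (simp add: mult_ac)
  qed
  have lt: "t^N * (cV m j0 * u^j0) < cV m j0 * v^j0"
  proof -
    have "2*real j0 + 1 - real m > 0" using m by (auto simp: j0_def)
    moreover have "real (m choose j0) > 0" using j0m by simp
    moreover have "1 - (-1::real)^j0 = 2" using j0m by simp
    ultimately have c: "cV m j0 > 0" unfolding cV_def by simp
    have "t^N < t^j0" using j0m t1 by (simp add: power_strict_increasing)
    then have "cV m j0 * t^N < cV m j0 * t^j0" using c by simp
    then have "(cV m j0 * t^N) * u^j0 < (cV m j0 * t^j0) * u^j0" using u by (simp add: mult_strict_right_mono)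
    then show ?thesis unfolding vt power_mult_distrib by (simp add: mult_ac)
  qed
  have "t^N * Vf m u = (\<Sum>j\<le>m. t^N*(cV m j*u^j))" using m by (simp add: Vf_sum sum_distrib_left)
  also have "\<dots> < (\<Sum>j\<le>m. cV m j * v^j)" by (rule sum_strict_mono_ex1) (use le lt j0m in auto)
  also have "\<dots> = Vf m v" using m by (simp add: Vf_sum)
  finally have "t^N * Vf m u < Vf m v" .
  moreover have "t^N * Vf m u \<ge> 0" using V0 t1 by simp
  ultimately show ?thesis by linarith
qed


lemma Vf_deriv0:
  assumes m: "m \<ge> 4"
  shows "(Vf m has_real_derivative (2*real m*(3 - real m))) (at 0)"
proof -
  have e: "Vf m = (\<lambda>u. (1+u)^(m-1)*((1+u) - real m*(1-u)) + (1-u)^(m-1)*(real m*(1+u) - (1-u)))"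
    by (rule ext) (simp add: Vf_def)
  show ?thesis unfolding e
    apply (rule derivative_eq_intros refl | simp)+
    using m by (simp add: algebra_simps of_nat_diff)
qed

lemma V_struct:
  assumes m: "m \<ge> 4"
  shows "\<exists>d. 0<d \<and> d<1 \<and> (\<forall>u. 0<u \<and> u<d \<longrightarrow> Vf m u < 0) \<and> (\<forall>u. d<u \<and> u<1 \<longrightarrow> Vf m u > 0)"
proof -
  have "2*real m*(3 - real m) < 0" using m by (simp add: mult_pos_neg)
  from DERIV_neg_dec_right[OF Vf_deriv0[OF m] this] obtain e where e: "e>0"
    and eh: "\<And>h. h>0 \<Longrightarrow> h<e \<Longrightarrow> Vf m (0+h) < Vf m 0" by blast
  have V00: "Vf m 0 = 0" by (simp add: Vf_def)
  define S where "S = {u. 0<u \<and> u<1 \<and> Vf m u \<ge> 0}"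
  define u0 where "u0 = (real m - 1)/(real m + 1)"
  have u0: "0 < u0" "u0 < 1" using m by (auto simp: u0_def)
  have "Vf m u0 > 0"
  proof -
    have "(1+u0) - real m*(1-u0) = 0" unfolding u0_def using m by (simp add: field_simps)
    moreover have "real m*(1+u0) - (1-u0) > 0"
    proof -
      have "real m \<ge> 1" using m by simp
      then have h: "real m*(1+u0) \<ge> 1*(1+u0)" using u0 by (intro mult_right_mono) auto
      have "1 - u0 < 1*(1+u0)" using u0 by simp
      with h show ?thesis by linarith
    qed
    moreover have "(1-u0)^(m-1) > 0" using u0 by simp
    ultimately show ?thesis by (simp add: Vf_def)
  qed
  then have u0S: "u0 \<in> S" using u0 by (simp add: S_def)
  define e' where "e' = min e 1"
  have Sge: "s \<ge> e'" if "s \<in> S" for s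
  proof (rule ccontr)
    assume "\<not> s \<ge> e'"
    then have "s < e" using that by (auto simp: e'_def S_def)
    then have "Vf m s < 0" using eh[of s] that V00 by (auto simp: S_def)
    then show False using that by (auto simp: S_def)
  qed
  define d where "d = Inf S"
  have bdd: "bdd_below S" using Sge by (rule bdd_belowI)
  have d1: "d \<ge> e'" unfolding d_def using u0S Sge by (auto intro: cInf_greatest)
  have d2: "d \<le> u0" unfolding d_def using u0S bdd by (rule cInf_lower)
  show ?thesis
  proof (intro exI conjI allI impI)
    show "0 < d" using d1 e by (simp add: e'_def)
    show "d < 1" using d2 u0 by simp
  next
    fix u assume "0 < u \<and> u < d"
    then show "Vf m u < 0"
      using cInf_lower[OF _ bdd, of u] d2 u0 unfolding d_def S_def by fastforce
  next
    fix u assume u: "d < u \<and> u < 1"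
    then obtain s where s: "s \<in> S" "s < u" using cInf_less_iff[OF _ bdd] u0S unfolding d_def by blast
    then show "Vf m u > 0" using V_mono[OF m, of s u] u by (auto simp: S_def)
  qed
qed


definition Lf :: "real \<Rightarrow> real" where "Lf u = ln (1+u) - ln (1-u)"
definition Pn :: "nat \<Rightarrow> real \<Rightarrow> real" where "Pn m u = (1+u)^m - (1-u)^m"
definition Ef :: "nat \<Rightarrow> real \<Rightarrow> real" where "Ef m u = real m*((1+u)^m*(1-u) + (1+u)*(1-u)^m)"
definition Gf :: "nat \<Rightarrow> real \<Rightarrow> real" where "Gf m u = 2*Pn m u/Ef m u - Lf u"
definition Hf :: "nat \<Rightarrow> real \<Rightarrow> real" where "Hf m u = 2^m * Lf u / Pn m u"

lemma Ef_pos: "m \<ge> 1 \<Longrightarrow> -1 < u \<Longrightarrow> u < 1 \<Longrightarrow> Ef m u > 0"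
proof -
  assume "m \<ge> 1" "-1 < u" "u < 1"
  then have "0 < 1+u" "0 < 1-u" "real m > 0" by auto
  moreover from this have "(1+u)^m*(1-u) > 0" "(1+u)*(1-u)^m > 0" by simp_all
  ultimately show ?thesis unfolding Ef_def by (metis add_pos_pos mult_pos_pos)
qed

lemma G_ident:
  fixes a b A B m :: real
  shows "((m*A+m*B)*(m*(a*A*b+a*b*B)) - (a*A-b*B)*(m*(m*A*b-a*A+b*B-m*a*B)))*a*b - (m*(a*A*b+a*b*B))^2
     = m*a*b*(a*A-b*B)*(A*(a-m*b)+B*(m*a-b))"
  by algebra


lemma dP_lem:
  assumes mn: "m = Suc n"
  shows "(Pn m has_real_derivative (real m*(1+u)^n + real m*(1-u)^n)) (at u)"
proof -
  have e: "Pn m = (\<lambda>u. (1+u)^m - (1-u)^m)" by (rule ext) (simp add: Pn_def)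
  show ?thesis unfolding e
    apply (auto intro!: derivative_eq_intros)
    by (simp_all add: mn)
qed

lemma dE_lem:
  assumes mn: "m = Suc n"
  shows "(Ef m has_real_derivative (real m*(real m*(1+u)^n*(1-u) - (1+u)*(1+u)^n + (1-u)*(1-u)^n - real m*(1+u)*(1-u)^n))) (at u)"
proof -
  have e: "Ef m = (\<lambda>u. real m*((1+u)^m*(1-u) + (1+u)*(1-u)^m))" by (rule ext) (simp add: Ef_def)
  show ?thesis unfolding e
    apply (auto intro!: derivative_eq_intros)
    by (simp_all add: mn algebra_simps)
qed

lemma dL_lem:
  assumes u: "-1 < u" "u < 1"
  shows "(Lf has_real_derivative (1/(1+u) + 1/(1-u))) (at u)"
proof -
  have e: "Lf = (\<lambda>u. ln (1+u) - ln (1-u))" by (rule ext) (simp add: Lf_def)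
  show ?thesis unfolding e
    using u by (auto intro!: derivative_eq_intros)
qed

lemma G_alg:
  fixes a b A B m E :: real
  assumes a: "a > 0" and b: "b > 0" and ab: "a + b = 2" and E: "E = m*(a*A*b+a*b*B)" and E0: "E \<noteq> 0"
  shows "((2*(m*A+m*B))*E - (m*(m*A*b-a*A+b*B-m*a*B))*(2*(a*A-b*B)))/E^Suc (Suc 0) - (1/a+1/b)
       = 2*m*(a*A-b*B)*(A*(a-m*b)+B*(m*a-b))/E^2"
proof -
  have i: "1/a+1/b = 2/(a*b)" using a b ab by (simp add: field_simps)
  have "((2*(m*A+m*B))*E - (m*(m*A*b-a*A+b*B-m*a*B))*(2*(a*A-b*B)))/E^Suc (Suc 0) - (1/a+1/b)
      = 2*(((m*A+m*B)*E - (a*A-b*B)*(m*(m*A*b-a*A+b*B-m*a*B)))*a*b - E^2)/(E^2*(a*b))"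
    unfolding i using a b E0 by (simp add: field_simps power2_eq_square)
  also have "\<dots> = 2*((((m*A+m*B)*(m*(a*A*b+a*b*B)) - (a*A-b*B)*(m*(m*A*b-a*A+b*B-m*a*B)))*a*b - (m*(a*A*b+a*b*B))^2))/(E^2*(a*b))"
    unfolding E ..
  also have "\<dots> = 2*(m*a*b*(a*A-b*B)*(A*(a-m*b)+B*(m*a-b)))/(E^2*(a*b))"
    by (simp only: G_ident)
  also have "\<dots> = 2*m*(a*A-b*B)*(A*(a-m*b)+B*(m*a-b))/E^2"
    using a b E0 by (simp add: field_simps power2_eq_square)
  finally show ?thesis .
qed

lemma G_deriv:
  assumes m: "m \<ge> 1" and u: "-1 < u" "u < 1"
  shows "(Gf m has_real_derivative (2*real m*Pn m u*Vf m u/(Ef m u)^2)) (at u)"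
proof -
  obtain n where mn: "m = Suc n" using m by (cases m) auto
  have E0: "Ef m u \<noteq> 0" using Ef_pos[OF m u] by simp
  have e: "Gf m = (\<lambda>u. (\<lambda>u. 2*Pn m u) u/Ef m u - Lf u)" by (rule ext) (simp add: Gf_def)
  have d: "(Gf m has_real_derivative
     ((2*(real m*(1+u)^n + real m*(1-u)^n))*Ef m u - (real m*(real m*(1+u)^n*(1-u) - (1+u)*(1+u)^n + (1-u)*(1-u)^n - real m*(1+u)*(1-u)^n))*(2*Pn m u))/(Ef m u)^Suc (Suc 0)
      - (1/(1+u) + 1/(1-u))) (at u)"
    unfolding e
    by (rule DERIV_diff[OF DERIV_quotient[OF DERIV_cmult[OF dP_lem[OF mn]] dE_lem[OF mn] E0] dL_lem[OF u]])
  have hP: "Pn m u = (1+u)*(1+u)^n - (1-u)*(1-u)^n" by (simp add: Pn_def mn)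
  have hE: "Ef m u = real m*((1+u)*(1+u)^n*(1-u)+(1+u)*(1-u)*(1-u)^n)" by (simp add: Ef_def mn algebra_simps)
  have hV: "Vf m u = (1+u)^n*((1+u)-real m*(1-u))+(1-u)^n*(real m*(1+u)-(1-u))" by (simp add: Vf_def mn)
  have "((2*(real m*(1+u)^n + real m*(1-u)^n))*Ef m u - (real m*(real m*(1+u)^n*(1-u) - (1+u)*(1+u)^n + (1-u)*(1-u)^n - real m*(1+u)*(1-u)^n))*(2*Pn m u))/(Ef m u)^Suc (Suc 0)
      - (1/(1+u) + 1/(1-u)) = 2*real m*Pn m u*Vf m u/(Ef m u)^2"
    unfolding hP hV
    using G_alg[of "1+u" "1-u" "Ef m u" "real m" "(1+u)^n" "(1-u)^n"] u hE E0 by (simp add: mult_ac)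
  with d show ?thesis by simp
qed

lemma Pn_pos: "m \<ge> 1 \<Longrightarrow> 0 < u \<Longrightarrow> u < 1 \<Longrightarrow> Pn m u > 0"
  unfolding Pn_def by (simp add: power_strict_mono)

lemma Pn_le: "0 < u \<Longrightarrow> u < 1 \<Longrightarrow> Pn m u \<le> 2^m"
proof -
  assume u: "0 < u" "u < 1"
  have "(1+u)^m \<le> 2^m" using u by (intro power_mono) auto
  moreover have "(1-u)^m \<ge> 0" using u by simp
  ultimately show ?thesis unfolding Pn_def by linarith
qed

lemma Lf_pos: "0 < u \<Longrightarrow> u < 1 \<Longrightarrow> Lf u > 0"
  unfolding Lf_def by simp

lemma G_pos_near1:
  assumes m: "m \<ge> 4"
  shows "Gf m (1 - 1/(64*(real m)^2)) > 0"
proof -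
  obtain n where mn: "m = Suc n" using m by (cases m) auto
  define b where "b = 1/(64*(real m)^2)"
  define u where "u = 1 - b"
  define a where "a = 1 + u"
  have rm: "real m \<ge> 4" using m by simp
  have b0: "b > 0" using rm by (simp add: b_def)
  have "1 \<le> (real m)^2" using rm by (intro one_le_power) simp
  then have "64*(real m)^2 \<ge> 64" by simp
  then have b1: "b \<le> 1/64" unfolding b_def by (simp add: divide_simps)
  have u1: "0 < u" "u < 1" using b0 b1 by (auto simp: u_def)
  have ab: "a - b = 2*u" "1 - u = b" by (auto simp: a_def u_def)
  have a2: "a \<le> 2" "a \<ge> 1" using u1 by (auto simp: a_def)
  have ba: "b < a" using ab u1 by linarith
  have An: "b^n \<le> a^n" using ba b0 by (intro power_mono) auto
  have Pge: "Pn m u \<ge> a^n*(a-b)"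
  proof -
    have "b*b^n \<le> b*a^n" using An b0 by (simp add: mult_left_mono)
    moreover have "Pn m u = a*a^n - b*b^n" unfolding Pn_def mn a_def using ab(2) by simp
    moreover have "a^n*(a-b) = a*a^n - b*a^n" by (simp add: algebra_simps)
    ultimately show ?thesis by linarith
  qed
  have Epos: "Ef m u > 0" using Ef_pos[of m u] u1 m by simp
  have Ele: "Ef m u \<le> 2*real m*a*a^n*b"
  proof -
    have "a*b*b^n \<le> a*b*a^n" using An b0 a2 by (simp add: mult_left_mono)
    then have "a*a^n*b + a*b*b^n \<le> 2*(a*a^n*b)" by (simp add: algebra_simps)
    then have "real m*(a*a^n*b + a*b*b^n) \<le> real m*(2*(a*a^n*b))" by (simp add: mult_left_mono)
    moreover have "Ef m u = real m*(a*a^n*b + a*b*b^n)" unfolding Ef_def mn a_def using ab(2) by (simp add: mult_ac)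
    ultimately show ?thesis by (simp add: mult_ac)
  qed
  have anp: "a^n > 0" using a2 by simp
  have "2*Pn m u/Ef m u \<ge> 2*(a^n*(a-b))/Ef m u"
    using Pge Epos by (simp add: divide_right_mono)
  moreover have "2*(a^n*(a-b))/Ef m u \<ge> 2*(a^n*(a-b))/(2*real m*a*a^n*b)"
    using Ele Epos ba anp a2 b0 rm by (intro divide_left_mono) auto
  moreover have "2*(a^n*(a-b))/(2*real m*a*a^n*b) = (a-b)/(real m*a*b)"
    using anp a2 b0 rm by (simp add: field_simps)
  moreover have "(a-b)/(real m*a*b) \<ge> 1/(2*real m*b)"
  proof -
    have "a-b \<ge> 1" using b1 ab by (simp add: u_def)
    moreover have "real m*a*b \<le> 2*real m*b" using a2 b0 rm by (simp add: mult_right_mono)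
    moreover have "real m*a*b > 0" using a2 b0 rm by simp
    ultimately show ?thesis by (simp add: frac_le)
  qed
  moreover have "1/(2*real m*b) = 32*real m" unfolding b_def using rm by (simp add: field_simps power2_eq_square)
  ultimately have lo: "2*Pn m u/Ef m u \<ge> 32*real m" by linarith
  have "Lf u = ln a - ln b" by (simp add: Lf_def a_def ab)
  moreover have "ln a \<le> 1" using a2 ln_le_minus_one[of a] by linarith
  moreover have "ln b = - (ln 64 + 2*ln (real m))"
    unfolding b_def using rm by (simp add: ln_div ln_mult ln_realpow)
  moreover have "ln 64 < (64::real)" by (rule ln_less_self) simp
  moreover have "ln (real m) < real m" using rm by (intro ln_less_self) simp
  ultimately have "Lf u < 65 + 2*real m" by linarith
  with lo rm have "Gf m u > 0" unfolding Gf_def by linarith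
  then show ?thesis by (simp add: u_def b_def)
qed

lemma G_cont:
  assumes m: "m \<ge> 1" and xy: "-1 < x" "y < 1"
  shows "continuous_on {x..y} (Gf m)"
proof (rule continuous_at_imp_continuous_on, intro ballI)
  fix u assume "u \<in> {x..y}"
  then have "-1 < u" "u < 1" using xy by auto
  then show "isCont (Gf m) u" using G_deriv[OF m] DERIV_isCont by blast
qed

lemma G_zero: "Gf m 0 = 0"
  by (simp add: Gf_def Pn_def Lf_def)

lemma G_dec:
  assumes m: "m \<ge> 1" and V: "\<And>u. x < u \<Longrightarrow> u < y \<Longrightarrow> Vf m u < 0" and xy: "0 \<le> x" "x < y" "y < 1"
  shows "Gf m y < Gf m x"
proof (rule DERIV_neg_imp_decreasing_open[OF xy(2)])
  fix u assume u: "x < u" "u < y"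
  have "2*real m*Pn m u > 0" using Pn_pos[OF m, of u] u xy m by simp
  moreover have "(Ef m u)^2 > 0" using Ef_pos[OF m, of u] u xy by simp
  ultimately have "2*real m*Pn m u*Vf m u/(Ef m u)^2 < 0" using V[OF u]
    by (simp add: divide_neg_pos mult_pos_neg)
  then show "\<exists>y. DERIV (Gf m) u :> y \<and> y < 0" using G_deriv[OF m, of u] u xy by auto
next
  show "continuous_on {x..y} (Gf m)" using G_cont[OF m] xy by simp
qed

lemma G_inc:
  assumes m: "m \<ge> 1" and V: "\<And>u. x < u \<Longrightarrow> u < y \<Longrightarrow> Vf m u > 0" and xy: "0 \<le> x" "x < y" "y < 1"
  shows "Gf m x < Gf m y"
proof (rule DERIV_pos_imp_increasing_open[OF xy(2)])
  fix u assume u: "x < u" "u < y"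
  have "2*real m*Pn m u > 0" using Pn_pos[OF m, of u] u xy m by simp
  moreover have "(Ef m u)^2 > 0" using Ef_pos[OF m, of u] u xy by simp
  ultimately have "2*real m*Pn m u*Vf m u/(Ef m u)^2 > 0" using V[OF u] by simp
  then show "\<exists>y. DERIV (Gf m) u :> y \<and> y > 0" using G_deriv[OF m, of u] u xy by auto
next
  show "continuous_on {x..y} (Gf m)" using G_cont[OF m] xy by simp
qed

lemma G_struct:
  assumes m: "m \<ge> 4"
  shows "\<exists>c. 0<c \<and> c<1 \<and> (\<forall>u. 0<u \<and> u<c \<longrightarrow> Gf m u < 0) \<and> (\<forall>u. c<u \<and> u<1 \<longrightarrow> Gf m u > 0)"
proof -
  have m1: "m \<ge> 1" using m by simp
  obtain d where d: "0<d" "d<1" and Vn: "\<And>u. 0<u \<Longrightarrow> u<d \<Longrightarrow> Vf m u < 0"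
    and Vp: "\<And>u. d<u \<Longrightarrow> u<1 \<Longrightarrow> Vf m u > 0" using V_struct[OF m] by blast
  have dec: "Gf m y < Gf m x" if "0 \<le> x" "x < y" "y \<le> d" for x y
    using G_dec[OF m1, of x y] Vn that d by auto
  have inc: "Gf m x < Gf m y" if "d \<le> x" "x < y" "y < 1" for x y
    using G_inc[OF m1, of x y] Vp that d by auto
  define us where "us = 1 - 1/(64*(real m)^2)"
  have usp: "Gf m us > 0" using G_pos_near1[OF m] by (simp add: us_def)
  have "1 \<le> (real m)^2" using m by (intro one_le_power) simp
  then have h: "64*(real m)^2 > 1" by linarith
  then have "1/(64*(real m)^2) < 1" "1/(64*(real m)^2) > 0"
    using m by (simp_all add: divide_less_eq_1 zero_less_divide_iff del: of_nat_power)
  then have us1: "us < 1" "us > 0" by (auto simp: us_def)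
  have Gd: "Gf m d < 0" using dec[of 0 d] d G_zero by simp
  have dus: "d < us"
  proof (rule ccontr)
    assume "\<not> d < us"
    with us1 have "Gf m us < 0" using dec[of 0 us] G_zero by simp
    with usp show False by simp
  qed
  obtain c where c: "d \<le> c" "c \<le> us" "Gf m c = 0"
    using IVT'[of "Gf m" d 0 us] Gd usp dus G_cont[OF m1, of d us] d us1 by auto
  have dc: "d < c" using c Gd by (cases "d = c") auto
  show ?thesis
  proof (intro exI conjI allI impI)
    show "0 < c" using d dc by simp
    show "c < 1" using c us1 by simp
  next
    fix u assume u: "0 < u \<and> u < c"
    show "Gf m u < 0"
    proof (cases "u \<le> d")
      case True then show ?thesis using dec[of 0 u] u G_zero by simp
    next
      case False then show ?thesis using inc[of u c] u c us1 by simp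
    qed
  next
    fix u assume u: "c < u \<and> u < 1"
    then show "Gf m u > 0" using inc[of c u] c dc by simp
  qed
qed

lemma H_alg:
  fixes a b X L P :: real
  assumes a: "a > 0" and b: "b > 0" and ab: "a + b = 2" and Pp: "X > 0" and P0: "P \<noteq> 0"
  shows "(2^k*(1/a+1/b)*P - X*(2^k*L))/P^Suc (Suc 0)
       = 2^k*X*(2*P/(a*b*X) - L)/P^2"
proof -
  have i: "1/a+1/b = 2/(a*b)" using a b ab by (simp add: field_simps)
  show ?thesis unfolding i using a b Pp P0 by (simp add: field_simps power2_eq_square)
qed

lemma H_deriv:
  assumes m: "m \<ge> 1" and u: "0 < u" "u < 1"
  shows "\<exists>D. (Hf m has_real_derivative D) (at u) \<and> (D > 0 \<longleftrightarrow> Gf m u > 0) \<and> (D < 0 \<longleftrightarrow> Gf m u < 0)"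
proof -
  obtain n where mn: "m = Suc n" using m by (cases m) auto
  have P0: "Pn m u \<noteq> 0" using Pn_pos[OF m u] by simp
  have e: "Hf m = (\<lambda>u. (\<lambda>u. 2^m * Lf u) u / Pn m u)" by (rule ext) (simp add: Hf_def)
  have d: "(Hf m has_real_derivative
    ((2^m*(1/(1+u)+1/(1-u)))*Pn m u - (real m*(1+u)^n + real m*(1-u)^n)*(2^m*Lf u))/(Pn m u)^Suc (Suc 0)) (at u)"
    unfolding e using u
    by (intro DERIV_quotient[OF DERIV_cmult[OF dL_lem] dP_lem[OF mn] P0]) auto
  have Pp: "real m*(1+u)^n + real m*(1-u)^n > 0" using u m by (intro add_pos_pos) auto
  have hE: "Ef m u = (1+u)*(1-u)*(real m*(1+u)^n + real m*(1-u)^n)" by (simp add: Ef_def mn algebra_simps)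
  have eq: "((2^m*(1/(1+u)+1/(1-u)))*Pn m u - (real m*(1+u)^n + real m*(1-u)^n)*(2^m*Lf u))/(Pn m u)^Suc (Suc 0)
     = 2^m*(real m*(1+u)^n + real m*(1-u)^n)*Gf m u/(Pn m u)^2"
    unfolding Gf_def hE using H_alg[of "1+u" "1-u" "real m*(1+u)^n + real m*(1-u)^n" "Pn m u" m "Lf u"] u Pp P0
    by (simp add: mult_ac)
  define K :: real where "K = 2^m*(real m*(1+u)^n + real m*(1-u)^n)/(Pn m u)^2"
  have pos: "K > 0" using Pp P0 by (simp add: K_def)
  have eq2: "2^m*(real m*(1+u)^n + real m*(1-u)^n)*Gf m u/(Pn m u)^2 = K * Gf m u"
    by (simp add: K_def)
  have d2: "(Hf m has_real_derivative K * Gf m u) (at u)" using d eq eq2 by simp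
  have "(K * Gf m u > 0 \<longleftrightarrow> Gf m u > 0)" using pos by (simp add: zero_less_mult_iff)
  moreover have "(K * Gf m u < 0 \<longleftrightarrow> Gf m u < 0)" using pos by (simp add: mult_less_0_iff)
  ultimately show ?thesis using d2 by blast
qed

lemma H_cont:
  assumes m: "m \<ge> 1" and xy: "0 < x" "y < 1"
  shows "continuous_on {x..y} (Hf m)"
proof (rule continuous_at_imp_continuous_on, intro ballI)
  fix u assume "u \<in> {x..y}"
  then have "0 < u" "u < 1" using xy by auto
  then show "isCont (Hf m) u" using H_deriv[OF m] DERIV_isCont by blast
qed

lemma H_dec:
  assumes m: "m \<ge> 1" and G: "\<And>u. x < u \<Longrightarrow> u < y \<Longrightarrow> Gf m u < 0" and xy: "0 < x" "x < y" "y < 1"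
  shows "Hf m y < Hf m x"
proof (rule DERIV_neg_imp_decreasing_open[OF xy(2)])
  fix u assume u: "x < u" "u < y"
  then show "\<exists>y. DERIV (Hf m) u :> y \<and> y < 0" using H_deriv[OF m, of u] G[OF u] xy by auto
next
  show "continuous_on {x..y} (Hf m)" using H_cont[OF m] xy by simp
qed

lemma H_inc:
  assumes m: "m \<ge> 1" and G: "\<And>u. x < u \<Longrightarrow> u < y \<Longrightarrow> Gf m u > 0" and xy: "0 < x" "x < y" "y < 1"
  shows "Hf m x < Hf m y"
proof (rule DERIV_pos_imp_increasing_open[OF xy(2)])
  fix u assume u: "x < u" "u < y"
  then show "\<exists>y. DERIV (Hf m) u :> y \<and> y > 0" using H_deriv[OF m, of u] G[OF u] xy by auto
next
  show "continuous_on {x..y} (Hf m)" using H_cont[OF m] xy by simp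
qed

lemma H_lim:
  assumes m: "m \<ge> 1"
  shows "(Hf m \<longlongrightarrow> 2^m / real m) (at_right 0)"
proof -
  obtain n where mn: "m = Suc n" using m by (cases m) auto
  have dL: "(Lf has_real_derivative 2) (at 0 within {0<..})"
    using dL_lem[of 0] by (simp add: has_field_derivative_at_within)
  have dP: "(Pn m has_real_derivative 2*real m) (at 0 within {0<..})"
    using dP_lem[OF mn, of 0] by (simp add: has_field_derivative_at_within)
  have L0: "Lf 0 = 0" by (simp add: Lf_def)
  have P0: "Pn m 0 = 0" by (simp add: Pn_def)
  have l1: "((\<lambda>y. Lf y / y) \<longlongrightarrow> 2) (at_right 0)"
    using dL unfolding has_field_derivative_iff L0 by simp
  have l2: "((\<lambda>y. Pn m y / y) \<longlongrightarrow> 2*real m) (at_right 0)"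
    using dP unfolding has_field_derivative_iff P0 by simp
  have l3: "((\<lambda>y. 2^m * (Lf y / y) / (Pn m y / y)) \<longlongrightarrow> 2^m * 2 / (2*real m)) (at_right 0)"
    using m by (intro tendsto_intros l1 l2) auto
  have ev: "eventually (\<lambda>y. 2^m * (Lf y / y) / (Pn m y / y) = Hf m y) (at_right 0)"
    using eventually_at_right_less[of "0::real"] by eventually_elim (simp add: Hf_def)
  have "(Hf m \<longlongrightarrow> 2^m * 2 / (2*real m)) (at_right 0)"
    by (rule Lim_transform_eventually[OF l3 ev])
  then show ?thesis by simp
qed


lemma mf_iff:
  assumes z: "z \<ge> 2"
  shows "u \<in> mf_solutions \<beta> z \<longleftrightarrow> u = 0 \<or> (0 < u \<and> u < 1 \<and> Hf (z-1) u = \<beta>)"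
proof (cases "0 < u \<and> u < 1")
  case True
  then have u: "0 < u" "u < 1" by auto
  define m where "m = z - 1"
  have m: "m \<ge> 1" using z by (simp add: m_def)
  define D where "D = Delta2 \<beta> z u"
  have D: "D = -(\<beta>/2^m)*Pn m u" unfolding D_def Delta2_def Pn_def m_def by simp
  have P: "Pn m u > 0" using Pn_pos[OF m u] .
  have "u = (1 - exp D)/(1 + exp D) \<longleftrightarrow> u*(1 + exp D) = 1 - exp D"
    by (smt (verit) exp_gt_zero nonzero_mult_div_cancel_right divide_eq_eq)
  also have "\<dots> \<longleftrightarrow> exp D = (1-u)/(1+u)" using u by (auto simp: field_simps)
  also have "\<dots> \<longleftrightarrow> D = ln ((1-u)/(1+u))"
    using u by (metis divide_pos_pos exp_ln ln_exp add_pos_pos diff_gt_0_iff_gt zero_less_one)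
  also have "ln ((1-u)/(1+u)) = - Lf u" using u by (simp add: ln_div Lf_def)
  also have "(D = - Lf u) \<longleftrightarrow> Hf m u = \<beta>"
    unfolding D Hf_def using P by (auto simp: field_simps)
  finally show ?thesis using u unfolding mf_solutions_def D_def m_def by auto
next
  case False
  show ?thesis
  proof
    assume "u \<in> mf_solutions \<beta> z"
    then have "0 \<le> u" "u < 1" "u = (1 - exp (Delta2 \<beta> z u)) / (1 + exp (Delta2 \<beta> z u))"
      by (auto simp: mf_solutions_def)
    then show "u = 0 \<or> (0 < u \<and> u < 1 \<and> Hf (z-1) u = \<beta>)" using False by auto
  next
    assume "u = 0 \<or> (0 < u \<and> u < 1 \<and> Hf (z-1) u = \<beta>)"
    then have "u = 0" using False by auto
    then show "u \<in> mf_solutions \<beta> z" by (simp add: mf_solutions_def Delta2_def)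
  qed
qed


theorem lemma5p5:
  fixes z :: nat
  assumes "z > 4"
  shows "\<exists>\<beta>0 \<beta>1::real. 0 < \<beta>0 \<and> \<beta>0 < \<beta>1 \<and>
    (\<forall>\<beta>. 0 < \<beta> \<and> \<beta> < \<beta>0 \<longrightarrow> mf_solutions \<beta> z = {0}) \<and>
    (\<forall>\<beta>. \<beta>0 < \<beta> \<and> \<beta> < \<beta>1 \<longrightarrow>
       (\<exists>u1 u2. 0 < u1 \<and> u1 < u2 \<and> u2 < 1 \<and> mf_solutions \<beta> z = {0, u1, u2})) \<and>
    (\<forall>\<beta>. \<beta> = \<beta>0 \<or> \<beta> \<ge> \<beta>1 \<longrightarrow>
       (\<exists>u2. 0 < u2 \<and> u2 < 1 \<and> mf_solutions \<beta> z = {0, u2}))"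
proof -
  define m where "m = z - 1"
  have m: "m \<ge> 4" using assms by (simp add: m_def)
  have m1: "m \<ge> 1" using m by simp
  have z2: "z \<ge> 2" using assms by simp
  have mfi: "\<And>u \<beta>. u \<in> mf_solutions \<beta> z \<longleftrightarrow> u = 0 \<or> (0 < u \<and> u < 1 \<and> Hf m u = \<beta>)"
    using mf_iff[OF z2] by (simp add: m_def)
  obtain c where c: "0<c" "c<1" and Gn: "\<And>u. 0<u \<Longrightarrow> u<c \<Longrightarrow> Gf m u < 0"
    and Gp: "\<And>u. c<u \<Longrightarrow> u<1 \<Longrightarrow> Gf m u > 0" using G_struct[OF m] by blast
  have Hdec: "Hf m y < Hf m x" if "0 < x" "x < y" "y \<le> c" for x y
    using H_dec[OF m1, of x y] Gn that c by auto
  have Hinc: "Hf m x < Hf m y" if "c \<le> x" "x < y" "y < 1" for x y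
    using H_inc[OF m1, of x y] Gp that c by auto
  define \<beta>0 where "\<beta>0 = Hf m c"
  define \<beta>1 where "\<beta>1 = 2^m / real m"
  have Hge: "Hf m u > \<beta>0" if "0 < u" "u < 1" "u \<noteq> c" for u
    using that Hdec[of u c] Hinc[of c u] unfolding \<beta>0_def by (cases "u < c") auto
  have lim: "(Hf m \<longlongrightarrow> \<beta>1) (at_right 0)" unfolding \<beta>1_def by (rule H_lim[OF m1])
  have Hlt: "Hf m u < \<beta>1" if "0 < u" "u \<le> c" for u
  proof -
    have "Hf m (u/2) \<le> \<beta>1"
    proof (rule tendsto_lowerbound[OF lim])
      show "\<forall>\<^sub>F v in at_right 0. Hf m (u/2) \<le> Hf m v"
        unfolding eventually_at_right_field
        using that by (intro exI[of _ "u/2"]) (auto intro!: less_imp_le Hdec)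
    qed simp
    moreover have "Hf m u < Hf m (u/2)" using that by (intro Hdec) auto
    ultimately show ?thesis by simp
  qed
  have b01: "\<beta>0 < \<beta>1" using Hlt[of c] c by (simp add: \<beta>0_def)
  have b0: "\<beta>0 > 0" unfolding \<beta>0_def Hf_def using Lf_pos[OF c] Pn_pos[OF m1 c] by simp
  have small: "\<exists>e. 0 < e \<and> e < c \<and> Hf m e > \<beta>" if "\<beta> < \<beta>1" for \<beta>
  proof -
    have "\<forall>\<^sub>F v in at_right 0. \<beta> < Hf m v" using order_tendstoD(1)[OF lim that] .
    then obtain b where b: "b > 0" "\<And>y. y > 0 \<Longrightarrow> y < b \<Longrightarrow> \<beta> < Hf m y"
      unfolding eventually_at_right_field by auto
    show ?thesis using b c by (intro exI[of _ "min b c / 2"]) auto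
  qed
  have big: "\<exists>w. c < w \<and> w < 1 \<and> Hf m w > \<beta>" for \<beta>
  proof -
    define w where "w = 1 - (1-c)*exp(-(\<bar>\<beta>\<bar>+1))"
    have ex: "exp(-(\<bar>\<beta>\<bar>+1)) < 1" "exp(-(\<bar>\<beta>\<bar>+1)) > 0" by auto
    have q1: "(1-c)*exp(-(\<bar>\<beta>\<bar>+1)) < (1-c)*1" using ex c by (intro mult_strict_left_mono) auto
    have q2: "(1-c)*exp(-(\<bar>\<beta>\<bar>+1)) > 0" using ex c by simp
    have cw: "c < w" "w < 1" unfolding w_def using q1 q2 by simp_all
    have w0: "0 < w" using c cw by simp
    have "1 - w = (1-c)*exp(-(\<bar>\<beta>\<bar>+1))" by (simp add: w_def)
    then have "ln (1-w) = ln (1-c) - (\<bar>\<beta>\<bar>+1)" using c by (simp add: ln_mult)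
    moreover have "ln (1-c) < 0" using c by simp
    moreover have "ln (1+w) \<ge> 0" using w0 by simp
    ultimately have L: "Lf w > \<bar>\<beta>\<bar>" unfolding Lf_def by linarith
    have P: "Pn m w > 0" "Pn m w \<le> 2^m" using Pn_pos[OF m1 w0 cw(2)] Pn_le[OF w0 cw(2)] by auto
    have "Hf m w \<ge> Lf w"
    proof -
      have "Lf w * Pn m w \<le> Lf w * 2^m" using P L by (intro mult_left_mono) auto
      then show ?thesis unfolding Hf_def using P by (simp add: field_simps)
    qed
    then show ?thesis using cw L by (intro exI[of _ w]) auto
  qed
  have contH: "continuous_on {x..y} (Hf m)" if "0 < x" "y < 1" for x y
    using H_cont[OF m1 that] .
  show ?thesis
  proof (rule exI[of _ \<beta>0], rule exI[of _ \<beta>1], intro conjI allI impI)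
    show "0 < \<beta>0" by (fact b0)
    show "\<beta>0 < \<beta>1" by (fact b01)
  next
    fix \<beta> assume "0 < \<beta> \<and> \<beta> < \<beta>0"
    then show "mf_solutions \<beta> z = {0}" unfolding set_eq_iff mfi
      using Hge \<beta>0_def by fastforce
  next
    fix \<beta> assume \<beta>: "\<beta>0 < \<beta> \<and> \<beta> < \<beta>1"
    obtain e where e: "0 < e" "e < c" "Hf m e > \<beta>" using small \<beta> by blast
    obtain u1 where u1: "e \<le> u1" "u1 \<le> c" "Hf m u1 = \<beta>"
      using IVT2'[of "Hf m" c \<beta> e] e \<beta> contH[of e c] c unfolding \<beta>0_def by auto
    obtain w where w: "c < w" "w < 1" "Hf m w > \<beta>" using big by blast
    obtain u2 where u2: "c \<le> u2" "u2 \<le> w" "Hf m u2 = \<beta>"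
      using IVT'[of "Hf m" c \<beta> w] w \<beta> contH[of c w] c unfolding \<beta>0_def by auto
    have u1c: "u1 < c" using u1 \<beta> unfolding \<beta>0_def by (cases "u1 = c") auto
    have u2c: "c < u2" using u2 \<beta> unfolding \<beta>0_def by (cases "u2 = c") auto
    have uniq: "u = u1 \<or> u = u2" if "0 < u" "u < 1" "Hf m u = \<beta>" for u
    proof -
      consider "u < c" | "u = c" | "u > c" by linarith
      then show ?thesis
      proof cases
        case 1
        then show ?thesis using that u1 u1c e Hdec[of u u1] Hdec[of u1 u]
          by (cases u u1 rule: linorder_cases) auto
      next
        case 2 then show ?thesis using that \<beta> \<beta>0_def by simp
      next
        case 3
        then show ?thesis using that u2 u2c w Hinc[of u u2] Hinc[of u2 u]
          by (cases u u2 rule: linorder_cases) auto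
      qed
    qed
    show "\<exists>u1 u2. 0 < u1 \<and> u1 < u2 \<and> u2 < 1 \<and> mf_solutions \<beta> z = {0, u1, u2}"
    proof (rule exI[of _ u1], rule exI[of _ u2], intro conjI)
      show "0 < u1" using u1 e by simp
      show "u1 < u2" using u1c u2c by simp
      show "u2 < 1" using u2 w by simp
      show "mf_solutions \<beta> z = {0, u1, u2}" unfolding set_eq_iff mfi
        using uniq u1 u2 u1c u2c e w c by auto
    qed
  next
    fix \<beta> assume \<beta>: "\<beta> = \<beta>0 \<or> \<beta> \<ge> \<beta>1"
    show "\<exists>u2. 0 < u2 \<and> u2 < 1 \<and> mf_solutions \<beta> z = {0, u2}"
    proof (cases "\<beta> = \<beta>0")
      case True
      show ?thesis
      proof (intro exI[of _ c] conjI)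
        show "0 < c" "c < 1" using c by auto
        show "mf_solutions \<beta> z = {0, c}" unfolding set_eq_iff mfi
          using Hge True c \<beta>0_def by fastforce
      qed
    next
      case False
      with \<beta> have b1: "\<beta> \<ge> \<beta>1" by simp
      obtain w where w: "c < w" "w < 1" "Hf m w > \<beta>" using big by blast
      obtain u2 where u2: "c \<le> u2" "u2 \<le> w" "Hf m u2 = \<beta>"
        using IVT'[of "Hf m" c \<beta> w] w b1 b01 contH[of c w] c unfolding \<beta>0_def by auto
      have u2c: "c < u2" using u2 b1 b01 unfolding \<beta>0_def by (cases "u2 = c") auto
      have uniq: "u = u2" if "0 < u" "u < 1" "Hf m u = \<beta>" for u
      proof -
        have "\<not> u \<le> c" using Hlt[of u] that b1 by auto
        then show ?thesis using that u2 u2c w Hinc[of u u2] Hinc[of u2 u]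
          by (cases u u2 rule: linorder_cases) auto
      qed
      show ?thesis
      proof (intro exI[of _ u2] conjI)
        show "0 < u2" using u2c c by simp
        show "u2 < 1" using u2 w by simp
        show "mf_solutions \<beta> z = {0, u2}" unfolding set_eq_iff mfi
          using uniq u2 u2c w c by auto
      qed
    qed
  qed
qed

end
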